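(* Let $C$ be a unital countably quantifier-free saturated C*-algebra and $B$ a separable C*-subalgebra of $C$. If $\Phi\colon B\to C$ is an approximately inner injective *-homomorphism, then there is a unitary $u\in C$ with $\Phi(b)=ubu^*$ for all $b\in B$.
   Context: $\Phi\colon B\to C$ is approximately inner if for every $\varepsilon>0$ and every finite $F\subseteq B$ there is a unitary $u\in C$ with $\|\Phi(a)-uau^*\|<\varepsilon$ for all $a\in F$. For $F\subseteq\mathbb R$, $\varepsilon>0$, $F_\varepsilon=\{x:\operatorname{dist}(x,F)\le\varepsilon\}$. $C$ is countably quantifier-free saturated if for every sequence $P_n(\bar x)$ of *-polynomials with coefficients in $C$ in variables $x_k$ ($k\in\mathbb N$) and compact $K_n\subseteq\mathbb R$, the following are equivalent: (i) there are $b_k$ in the unit ball of $C$ with $\|P_n(\bar b)\|\in K_n$ for all $n$; (ii) for every $m$ there are $b_k$ in the unit ball with $\|P_n(\bar b)\|\in(K_n)_{1/m}$ for all $n\le m$. *)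

theory Defs
  imports "HOL-Analysis.Analysis"
begin

text \<open>A unital C*-algebra is modelled as a type 'a of class real_normed_algebra_1
  (unital real Banach algebra with norm 1 = 1) and banach, together with a complex
  scalar multiplication sc extending the real one and an involution st.\<close>

definition cstar_algebra :: "(complex \<Rightarrow> 'a::{real_normed_algebra_1,banach} \<Rightarrow> 'a) \<Rightarrow> ('a \<Rightarrow> 'a) \<Rightarrow> bool" where
  "cstar_algebra sc st \<longleftrightarrow>
     (\<forall>r x. sc (complex_of_real r) x = scaleR r x) \<and>
     (\<forall>c x y. sc c (x + y) = sc c x + sc c y) \<and>
     (\<forall>c d x. sc (c + d) x = sc c x + sc d x) \<and>
     (\<forall>c d x. sc (c * d) x = sc c (sc d x)) \<and>
     (\<forall>c x y. sc c (x * y) = sc c x * y) \<and>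
     (\<forall>c x y. sc c (x * y) = x * sc c y) \<and>
     (\<forall>c x. norm (sc c x) = cmod c * norm x) \<and>
     (\<forall>x. st (st x) = x) \<and>
     (\<forall>x y. st (x + y) = st x + st y) \<and>
     (\<forall>c x. st (sc c x) = sc (cnj c) (st x)) \<and>
     (\<forall>x y. st (x * y) = st y * st x) \<and>
     (\<forall>x. norm (st x * x) = (norm x)\<^sup>2)"

definition cstar_subalgebra :: "(complex \<Rightarrow> 'a::{real_normed_algebra_1,banach} \<Rightarrow> 'a) \<Rightarrow> ('a \<Rightarrow> 'a) \<Rightarrow> 'a set \<Rightarrow> bool" where
  "cstar_subalgebra sc st B \<longleftrightarrow>
     0 \<in> B \<and> (\<forall>x\<in>B. \<forall>y\<in>B. x + y \<in> B \<and> x * y \<in> B) \<and>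
     (\<forall>c. \<forall>x\<in>B. sc c x \<in> B) \<and> (\<forall>x\<in>B. st x \<in> B) \<and> closed B"

definition separable_set :: "'a::metric_space set \<Rightarrow> bool" where
  "separable_set B \<longleftrightarrow> (\<exists>D. countable D \<and> D \<subseteq> B \<and> B \<subseteq> closure D)"

definition star_hom_on :: "(complex \<Rightarrow> 'a::{real_normed_algebra_1,banach} \<Rightarrow> 'a) \<Rightarrow> ('a \<Rightarrow> 'a) \<Rightarrow> 'a set \<Rightarrow> ('a \<Rightarrow> 'a) \<Rightarrow> bool" where
  "star_hom_on sc st B \<Phi> \<longleftrightarrow>
     (\<forall>x\<in>B. \<forall>y\<in>B. \<Phi> (x + y) = \<Phi> x + \<Phi> y \<and> \<Phi> (x * y) = \<Phi> x * \<Phi> y) \<and>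
     (\<forall>c. \<forall>x\<in>B. \<Phi> (sc c x) = sc c (\<Phi> x)) \<and>
     (\<forall>x\<in>B. \<Phi> (st x) = st (\<Phi> x))"

definition unitary :: "('a::real_normed_algebra_1 \<Rightarrow> 'a) \<Rightarrow> 'a \<Rightarrow> bool" where
  "unitary st u \<longleftrightarrow> st u * u = 1 \<and> u * st u = 1"

definition approx_inner :: "('a::{real_normed_algebra_1,banach} \<Rightarrow> 'a) \<Rightarrow> 'a set \<Rightarrow> ('a \<Rightarrow> 'a) \<Rightarrow> bool" where
  "approx_inner st B \<Phi> \<longleftrightarrow>
     (\<forall>\<epsilon>>0. \<forall>F. finite F \<and> F \<subseteq> B \<longrightarrow>
        (\<exists>u. unitary st u \<and> (\<forall>a\<in>F. norm (\<Phi> a - u * a * st u) < \<epsilon>)))"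

text \<open>*-polynomials (noncommutative) with coefficients in the algebra, in variables x_k, k :: nat.
  Complex scalars are absorbed into coefficients (c x = (c 1) x).\<close>
datatype 'a spoly = PVar nat | PConst 'a | PAdd "'a spoly" "'a spoly"
  | PMul "'a spoly" "'a spoly" | PStar "'a spoly"

primrec peval :: "('a::real_normed_algebra_1 \<Rightarrow> 'a) \<Rightarrow> (nat \<Rightarrow> 'a) \<Rightarrow> 'a spoly \<Rightarrow> 'a" where
  "peval st b (PVar k) = b k"
| "peval st b (PConst c) = c"
| "peval st b (PAdd p q) = peval st b p + peval st b q"
| "peval st b (PMul p q) = peval st b p * peval st b q"
| "peval st b (PStar p) = st (peval st b p)"

definition fatten :: "real set \<Rightarrow> real \<Rightarrow> real set" where
  "fatten F \<epsilon> = {x. \<exists>y\<in>F. \<bar>x - y\<bar> \<le> \<epsilon>}"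

definition qf_saturated :: "('a::{real_normed_algebra_1,banach} \<Rightarrow> 'a) \<Rightarrow> bool" where
  "qf_saturated st \<longleftrightarrow>
     (\<forall>(P :: nat \<Rightarrow> 'a spoly) (K :: nat \<Rightarrow> real set). (\<forall>n. compact (K n)) \<longrightarrow>
        ((\<exists>b. (\<forall>k. norm (b k) \<le> 1) \<and> (\<forall>n. norm (peval st b (P n)) \<in> K n)) \<longleftrightarrow>
         (\<forall>m::nat. m \<ge> 1 \<longrightarrow> (\<exists>b. (\<forall>k. norm (b k) \<le> 1) \<and>
             (\<forall>n\<le>m. norm (peval st b (P n)) \<in> fatten (K n) (1 / real m))))))"

end

theory Submission
  imports Defs
begin

lemma unit_norm:
  assumes "cstar_algebra sc st" "unitary st u"
  shows "norm u \<le> 1" "norm (st u) \<le> 1" "unitary st (st u)"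
proof -
  have C: "\<And>x. norm (st x * x) = (norm x)\<^sup>2" "\<And>x. st (st x) = x"
    using assms(1) unfolding cstar_algebra_def by auto
  have u: "st u * u = 1" "u * st u = 1" using assms(2) unfolding unitary_def by auto
  show us: "unitary st (st u)" using u C(2) unfolding unitary_def by simp
  have "(norm u)\<^sup>2 = 1" using C(1)[of u] u by simp
  then have "norm u = 1 \<or> norm u = -1" by (simp add: power2_eq_1_iff)
  then show "norm u \<le> 1" by linarith
  have "(norm (st u))\<^sup>2 = 1" using C(1)[of "st u"] u C(2) by simp
  then have "norm (st u) = 1 \<or> norm (st u) = -1" by (simp add: power2_eq_1_iff)
  then show "norm (st u) \<le> 1" by linarith
qed

lemma conj_bound:
  fixes v x :: "'a::real_normed_algebra_1"
  assumes "norm v \<le> 1" "norm w \<le> 1"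
  shows "norm (v * x * w) \<le> norm x"
proof -
  have "norm (v * x * w) \<le> norm v * norm x * norm w"
    proof -
    have "norm (v * x * w) \<le> norm (v * x) * norm w" by (rule norm_mult_ineq)
    also have "\<dots> \<le> norm v * norm x * norm w" by (intro mult_right_mono norm_mult_ineq) auto
    finally show ?thesis .
  qed
  also have "\<dots> \<le> 1 * norm x * 1"
    by (intro mult_mono assms) auto
  finally show ?thesis by simp
qed

lemma phi_lip:
  assumes A: "cstar_algebra sc st" and ai: "approx_inner st B \<Phi>" and b: "b \<in> B" and d: "d \<in> B"
  shows "norm (\<Phi> b - \<Phi> d) \<le> norm (b - d)"
proof (rule field_le_epsilon)
  fix e :: real assume e: "0 < e"
  obtain v where v: "unitary st v" and h: "\<forall>a\<in>{b,d}. norm (\<Phi> a - v * a * st v) < e/2"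
    proof -
    have "finite {b,d}" "{b,d} \<subseteq> B" "0 < e/2" using b d e by auto
    then show ?thesis using ai that unfolding approx_inner_def by blast
  qed
  have n: "norm v \<le> 1" "norm (st v) \<le> 1" using unit_norm[OF A v] by auto
  have eq: "\<Phi> b - \<Phi> d = (\<Phi> b - v * b * st v) - (\<Phi> d - v * d * st v) + v * (b - d) * st v"
    by (simp add: algebra_simps)
  have "norm (\<Phi> b - \<Phi> d) \<le> norm (\<Phi> b - v * b * st v) + norm (\<Phi> d - v * d * st v) + norm (v * (b - d) * st v)"
    unfolding eq using norm_triangle_ineq4 norm_triangle_ineq
    by (smt (verit))
  also have "\<dots> \<le> e/2 + e/2 + norm (b - d)"
    using h conj_bound[OF n] by (intro add_mono) auto
  finally show "norm (\<Phi> b - \<Phi> d) \<le> norm (b - d) + e" by simp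
qed

theorem mainTheorem16:
  fixes sc :: "complex \<Rightarrow> 'a::{real_normed_algebra_1,banach} \<Rightarrow> 'a"
    and st :: "'a \<Rightarrow> 'a" and B :: "'a set" and \<Phi> :: "'a \<Rightarrow> 'a"
  assumes "cstar_algebra sc st"
    and "qf_saturated st"
    and "cstar_subalgebra sc st B"
    and "separable_set B"
    and "star_hom_on sc st B \<Phi>"
    and "inj_on \<Phi> B"
    and "approx_inner st B \<Phi>"
  shows "\<exists>u. unitary st u \<and> (\<forall>b\<in>B. \<Phi> b = u * b * st u)"
proof -
  note A = assms(1)
  obtain D where D: "countable D" "D \<subseteq> B" "B \<subseteq> closure D"
    using assms(4) unfolding separable_set_def by auto
  have "0 \<in> B" using assms(3) unfolding cstar_subalgebra_def by auto
  then have Dne: "D \<noteq> {}" using D by auto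
  define e where "e = from_nat_into D"
  have eD: "range e = D" using Dne D(1) unfolding e_def by (simp add: range_from_nat_into)
  have eB: "e j \<in> B" for j using eD D(2) by auto
  define P :: "nat \<Rightarrow> 'a spoly" where "P n = (case n of 0 \<Rightarrow> PAdd (PMul (PStar (PVar 0)) (PVar 0)) (PConst (-1))
     | Suc 0 \<Rightarrow> PAdd (PMul (PVar 0) (PStar (PVar 0))) (PConst (-1))
     | Suc (Suc j) \<Rightarrow> PAdd (PConst (\<Phi> (e j))) (PMul (PConst (-1)) (PMul (PMul (PVar 0) (PConst (e j))) (PStar (PVar 0)))))" for n
  have ev: "peval st b (P 0) = st (b 0) * b 0 - 1"
    "peval st b (P (Suc 0)) = b 0 * st (b 0) - 1"
    "peval st b (P (Suc (Suc j))) = \<Phi> (e j) - b 0 * e j * st (b 0)" for b j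
    by (simp_all add: P_def)
  define K :: "nat \<Rightarrow> real set" where "K n = {0}" for n
  have sat: "(\<exists>b. (\<forall>k. norm (b k) \<le> 1) \<and> (\<forall>n. norm (peval st b (P n)) \<in> K n)) \<longleftrightarrow>
         (\<forall>m::nat. m \<ge> 1 \<longrightarrow> (\<exists>b. (\<forall>k. norm (b k) \<le> 1) \<and>
             (\<forall>n\<le>m. norm (peval st b (P n)) \<in> fatten (K n) (1 / real m))))"
  proof -
    have "\<forall>n. compact (K n)" unfolding K_def by simp
    then show ?thesis using assms(2) unfolding qf_saturated_def by blast
  qed
  have "\<forall>m::nat. m \<ge> 1 \<longrightarrow> (\<exists>b. (\<forall>k. norm (b k) \<le> 1) \<and>
             (\<forall>n\<le>m. norm (peval st b (P n)) \<in> fatten (K n) (1 / real m)))"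
  proof (intro allI impI)
    fix m :: nat assume m: "m \<ge> 1"
    have "0 < 1 / real m" using m by simp
    moreover have "finite (e ` {..<m})" "e ` {..<m} \<subseteq> B" using eB by auto
    ultimately obtain v where v: "unitary st v" and h: "\<forall>a\<in>e ` {..<m}. norm (\<Phi> a - v * a * st v) < 1 / real m"
      using assms(7) unfolding approx_inner_def by blast
    have vu: "st v * v = 1" "v * st v = 1" using v unfolding unitary_def by auto
    show "\<exists>b. (\<forall>k. norm (b k) \<le> 1) \<and> (\<forall>n\<le>m. norm (peval st b (P n)) \<in> fatten (K n) (1 / real m))"
    proof (intro exI[of _ "\<lambda>k. v"] conjI allI impI)
      show "norm v \<le> 1" for k using unit_norm[OF A v] by auto
      fix n assume n: "n \<le> m"
      have "n = 0 \<or> n = Suc 0 \<or> (\<exists>j. n = Suc (Suc j))" by (metis nat.exhaust)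
      then consider "n = 0" | "n = Suc 0" | j where "n = Suc (Suc j)" by blast
      then show "norm (peval st (\<lambda>k. v) (P n)) \<in> fatten (K n) (1 / real m)"
      proof cases
        case 1 then show ?thesis using ev(1)[of "\<lambda>k. v"] vu `0 < 1/real m` by (simp add: fatten_def K_def)
      next
        case 2 then show ?thesis using ev(2)[of "\<lambda>k. v"] vu `0 < 1/real m` by (simp add: fatten_def K_def)
      next
        case (3 j)
        then have "j < m" using n by simp
        then have "norm (\<Phi> (e j) - v * e j * st v) < 1 / real m" using h by auto
        then show ?thesis using 3 ev(3)[of "\<lambda>k. v" j] by (simp add: fatten_def K_def)
      qed
    qed
  qed
  with sat obtain b where b: "\<forall>k. norm (b k) \<le> 1" "\<forall>n. norm (peval st b (P n)) \<in> K n" by blast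
  define u where "u = b 0"
  have "norm (st u * u - 1) = 0" using b(2)[rule_format, of 0] ev(1)[of b] by (simp add: K_def u_def)
  moreover have "norm (u * st u - 1) = 0" using b(2)[rule_format, of 1] ev(2)[of b] by (simp add: K_def u_def)
  ultimately have uu: "unitary st u" unfolding unitary_def by simp
  have ue: "\<Phi> (e j) = u * e j * st u" for j
    using b(2)[rule_format, of "Suc (Suc j)"] ev(3)[of b j] by (simp add: K_def u_def)
  have n: "norm u \<le> 1" "norm (st u) \<le> 1" using unit_norm[OF A uu] by auto
  have "\<Phi> x = u * x * st u" if x: "x \<in> B" for x
  proof -
    have "norm (\<Phi> x - u * x * st u) \<le> 0"
    proof (rule field_le_epsilon)
      fix t :: real assume t: "0 < t"
      have "x \<in> closure D" using x D by auto
      then obtain d where d: "d \<in> D" "dist d x < t/2"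
        using closure_approachable t by (metis half_gt_zero)
      obtain j where j: "d = e j" using d eD by auto
      have dB: "d \<in> B" using d D by auto
      have l: "norm (\<Phi> x - \<Phi> d) \<le> norm (x - d)" by (rule phi_lip[OF A assms(7) x dB])
      have eq: "\<Phi> x - u * x * st u = (\<Phi> x - \<Phi> d) + u * (d - x) * st u"
        using ue[of j] j by (simp add: algebra_simps)
      have "norm (\<Phi> x - u * x * st u) \<le> norm (\<Phi> x - \<Phi> d) + norm (u * (d - x) * st u)"
        unfolding eq by (rule norm_triangle_ineq)
      also have "\<dots> \<le> norm (x - d) + norm (d - x)" using l conj_bound[OF n] by (intro add_mono) auto
      also have "\<dots> < t" using d(2) by (simp add: dist_norm norm_minus_commute)
      finally show "norm (\<Phi> x - u * x * st u) \<le> 0 + t" by simp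
    qed
    then show ?thesis by simp
  qed
  then show ?thesis using uu by blast
qed

end
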